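(* Let $\sigma$ be a super filling of $\mathrm{dg}(\lambda)$ (order $<_2$) and let $j$ be such that $\lambda_j=\lambda_{j+1}$. Then $\mathrm{maj}(\tau_j(\sigma))=\mathrm{maj}(\sigma)$.
   Context: Let $\lambda=(\lambda_1\ge\dots\ge\lambda_k>0)$ be a partition; $\mathrm{dg}(\lambda)=\{(r,i):1\le i\le k,1\le r\le\lambda_i\}$, $(r,i)$ being row $r$ from the bottom and column $i$ from the left (columns bottom-justified of heights $\lambda_i$); $\mathrm{leg}((r,i))=\lambda_i-r$. $\mathcal A=\{1,\bar1,2,\bar2,\dots\}$ consists of positive letters $i$ and negative letters $\bar i$, totally ordered by $<_2$: $0<1<2<3<\cdots<\bar3<\bar2<\bar1$. $I(a,b)=1$ if $a>b$ or $a=b$ is negative, and $I(a,b)=0$ if $a<b$ or $a=b$ is positive. A super filling is $\sigma:\mathrm{dg}(\lambda)\to\mathcal A$; a cell $u=(r,i)$, $r>1$, is a descent if $I(\sigma(u),\sigma((r-1,i)))=1$, and $\mathrm{maj}(\sigma)=\sum_{\text{descents }u}(\mathrm{leg}(u)+1)$. For letters $(a,b,c)$ (with $a$ possibly $0$) say $(a,b,c)$ is quinv if exactly one of $I(a,b)=1$, $I(c,b)=0$, $I(a,c)=0$ holds. The operator $\tau_j$ (for $\lambda_j=\lambda_{j+1}=k'$): write $a_r=\sigma((r,j))$, $b_r=\sigma((r,j+1))$. Let $r_{\max}$ be the largest $r\in\{2,\dots,k'\}$ such that $(a_r,a_{r-1},b_{r-1})$ and $(b_r,a_{r-1},b_{r-1})$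 are either both quinv or both not quinv; if no such $r$ exists, $r_{\max}=1$. Then $\tau_j(\sigma)$ is obtained from $\sigma$ by exchanging the entries of cells $(i,j)$ and $(i,j+1)$ for every $i$ with $r_{\max}\le i\le k'$, all other entries unchanged. *)

theory Defs
  imports Main
begin

text \<open>Letters: Zero is the auxiliary letter 0; Pos i is the positive letter i, Neg i is the
negative letter bar i (i >= 1 for genuine letters of the super alphabet A).\<close>
datatype letter = Zero | Pos nat | Neg nat

definition in_alphabet :: "letter \<Rightarrow> bool" where
  "in_alphabet x \<longleftrightarrow> (\<exists>i\<ge>1. x = Pos i \<or> x = Neg i)"

fun less2 :: "letter \<Rightarrow> letter \<Rightarrow> bool" where
  "less2 Zero y = (y \<noteq> Zero)"
| "less2 (Pos m) Zero = False"
| "less2 (Pos m) (Pos n) = (m < n)"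
| "less2 (Pos m) (Neg n) = True"
| "less2 (Neg m) (Neg n) = (n < m)"
| "less2 (Neg m) Zero = False"
| "less2 (Neg m) (Pos n) = False"

fun is_neg :: "letter \<Rightarrow> bool" where
  "is_neg (Neg _) = True"
| "is_neg _ = False"

definition Ind :: "letter \<Rightarrow> letter \<Rightarrow> bool" where
  "Ind a b \<longleftrightarrow> less2 b a \<or> (a = b \<and> is_neg a)"

definition quinv :: "letter \<Rightarrow> letter \<Rightarrow> letter \<Rightarrow> bool" where
  "quinv a b c \<longleftrightarrow>
     length (filter id [Ind a b, \<not> Ind c b, \<not> Ind a c]) = 1"

text \<open>A partition is a list lam = [lam_1, ..., lam_k], weakly decreasing, all parts positive.
Column i (1-based) has height lam ! (i - 1).\<close>
definition is_partition :: "nat list \<Rightarrow> bool" where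
  "is_partition lam \<longleftrightarrow> sorted_wrt (\<ge>) lam \<and> (\<forall>x\<in>set lam. x > 0)"

definition col :: "nat list \<Rightarrow> nat \<Rightarrow> nat" where
  "col lam i = lam ! (i - 1)"

text \<open>Cells are pairs (r, i): row r from the bottom, column i from the left.\<close>
definition dg :: "nat list \<Rightarrow> (nat \<times> nat) set" where
  "dg lam = {(r, i). 1 \<le> i \<and> i \<le> length lam \<and> 1 \<le> r \<and> r \<le> col lam i}"

definition leg :: "nat list \<Rightarrow> nat \<times> nat \<Rightarrow> nat" where
  "leg lam u = col lam (snd u) - fst u"

definition super_filling :: "nat list \<Rightarrow> (nat \<times> nat \<Rightarrow> letter) \<Rightarrow> bool" where
  "super_filling lam \<sigma> \<longleftrightarrow> (\<forall>u\<in>dg lam. in_alphabet (\<sigma> u))"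

definition is_descent :: "nat list \<Rightarrow> (nat \<times> nat \<Rightarrow> letter) \<Rightarrow> nat \<times> nat \<Rightarrow> bool" where
  "is_descent lam \<sigma> u \<longleftrightarrow> u \<in> dg lam \<and> fst u > 1 \<and> Ind (\<sigma> u) (\<sigma> (fst u - 1, snd u))"

definition maj :: "nat list \<Rightarrow> (nat \<times> nat \<Rightarrow> letter) \<Rightarrow> nat" where
  "maj lam \<sigma> = (\<Sum>u\<in>{u\<in>dg lam. is_descent lam \<sigma> u}. leg lam u + 1)"

definition r_max :: "nat list \<Rightarrow> nat \<Rightarrow> (nat \<times> nat \<Rightarrow> letter) \<Rightarrow> nat" where
  "r_max lam j \<sigma> =
     (let k' = col lam j;
          a = (\<lambda>r. \<sigma> (r, j)); b = (\<lambda>r. \<sigma> (r, j + 1));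
          S = {r. 2 \<le> r \<and> r \<le> k' \<and>
                  (quinv (a r) (a (r - 1)) (b (r - 1)) \<longleftrightarrow> quinv (b r) (a (r - 1)) (b (r - 1)))}
      in if S = {} then 1 else Max S)"

definition tau :: "nat list \<Rightarrow> nat \<Rightarrow> (nat \<times> nat \<Rightarrow> letter) \<Rightarrow> (nat \<times> nat \<Rightarrow> letter)" where
  "tau lam j \<sigma> = (\<lambda>(r, i).
     if r_max lam j \<sigma> \<le> r \<and> r \<le> col lam j then
       (if i = j then \<sigma> (r, j + 1) else if i = j + 1 then \<sigma> (r, j) else \<sigma> (r, i))
     else \<sigma> (r, i))"

end

theory Submission imports Defs begin

instantiation letter :: linorder begin
definition less_letter :: "letter \<Rightarrow> letter \<Rightarrow> bool" where "less_letter = less2"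
definition less_eq_letter :: "letter \<Rightarrow> letter \<Rightarrow> bool" where "less_eq_letter x y = (less2 x y \<or> x = y)"
instance
proof
  fix x y z :: letter
  show "(x < y) = (x \<le> y \<and> \<not> y \<le> x)"
    unfolding less_letter_def less_eq_letter_def by (cases x; cases y) auto
  show "x \<le> x" unfolding less_eq_letter_def by simp
  show "x \<le> y \<Longrightarrow> y \<le> z \<Longrightarrow> x \<le> z"
    unfolding less_eq_letter_def by (cases x; cases y; cases z) auto
  show "x \<le> y \<Longrightarrow> y \<le> x \<Longrightarrow> x = y"
    unfolding less_eq_letter_def by (cases x; cases y) auto
  show "x \<le> y \<or> y \<le> x"
    unfolding less_eq_letter_def by (cases x; cases y) auto
qed
end


lemma Ind_alt: "Ind a b \<longleftrightarrow> b < a \<or> (a = b \<and> is_neg a)"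
  unfolding Ind_def less_letter_def by simp

lemma quinv_alt: "quinv a b c \<longleftrightarrow>
  (Ind a b \<and> Ind c b \<and> Ind a c) \<or> (\<not> Ind a b \<and> \<not> Ind c b \<and> Ind a c) \<or> (\<not> Ind a b \<and> Ind c b \<and> \<not> Ind a c)"
  unfolding quinv_def by (cases "Ind a b"; cases "Ind c b"; cases "Ind a c") auto

lemma boolA:
  assumes "(if c then (p = q) else (p \<noteq> q)) = (if c then (r = s) else (r \<noteq> s))"
       "c \<Longrightarrow> q \<Longrightarrow> p" "c \<Longrightarrow> s \<Longrightarrow> r"
       "\<not> c \<Longrightarrow> p \<Longrightarrow> q" "\<not> c \<Longrightarrow> r \<Longrightarrow> s"
  shows "of_bool p + of_bool s = of_bool r + (of_bool q :: nat)"
proof -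
  have "((if c then (p = q) else (p \<noteq> q)) = (if c then (r = s) else (r \<noteq> s))) \<longrightarrow>
       (c \<longrightarrow> q \<longrightarrow> p) \<longrightarrow> (c \<longrightarrow> s \<longrightarrow> r) \<longrightarrow> (\<not> c \<longrightarrow> p \<longrightarrow> q) \<longrightarrow> (\<not> c \<longrightarrow> r \<longrightarrow> s) \<longrightarrow>
       of_bool p + of_bool s = of_bool r + (of_bool q :: nat)"
    by (cases c; cases p; cases q; cases r; cases s) simp_all
  then show ?thesis using assms by blast
qed

lemma keyA:
  fixes x y a b :: "'a::linorder" and neg :: "'a \<Rightarrow> bool"
  defines "I \<equiv> \<lambda>u v. v < u \<or> (u = v \<and> neg u)"
  defines "Q \<equiv> \<lambda>u v w. (I u v \<and> I w v \<and> I u w) \<or> (\<not> I u v \<and> \<not> I w v \<and> I u w) \<or> (\<not> I u v \<and> I w v \<and> \<not> I u w)"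
  assumes "Q x a b = Q y a b"
  shows "of_bool (I x a) + of_bool (I y b) = of_bool (I y a) + (of_bool (I x b) :: nat)"
proof -
  have m1: "I b a \<Longrightarrow> I z b \<Longrightarrow> I z a" for z unfolding I_def by auto
  have m2: "\<not> I b a \<Longrightarrow> I z a \<Longrightarrow> I z b" for z unfolding I_def by auto
  have Qx: "Q z a b = (if I b a then (I z a = I z b) else (I z a \<noteq> I z b))" for z
    using m1[of z] m2[of z] unfolding Q_def by auto
  show ?thesis using assms(3) unfolding Qx by (rule boolA[OF _ m1 m1 m2 m2])
qed

lemma key:
  assumes "quinv x a b \<longleftrightarrow> quinv y a b"
  shows "of_bool (Ind x a) + of_bool (Ind y b) = of_bool (Ind y a) + (of_bool (Ind x b) :: nat)"
  using keyA[where neg=is_neg and x=x and a=a and b=b and y=y] assms unfolding quinv_alt Ind_alt by blast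

lemma finite_dg: "finite (dg lam)"
proof -
  have "dg lam \<subseteq> (\<Union>i\<in>{1..length lam}. {1..col lam i} \<times> {i})"
    unfolding dg_def by auto
  then show ?thesis by (rule finite_subset) auto
qed

lemma maj_alt: "maj lam \<sigma> = (\<Sum>u\<in>dg lam. if is_descent lam \<sigma> u then leg lam u + 1 else 0)"
  unfolding maj_def by (rule sum.inter_filter[OF finite_dg])

lemma rmax_props:
  assumes "r_max lam j \<sigma> \<noteq> 1"
  shows "2 \<le> r_max lam j \<sigma> \<and> r_max lam j \<sigma> \<le> col lam j \<and>
    (quinv (\<sigma> (r_max lam j \<sigma>, j)) (\<sigma> (r_max lam j \<sigma> - 1, j)) (\<sigma> (r_max lam j \<sigma> - 1, j + 1))
     \<longleftrightarrow> quinv (\<sigma> (r_max lam j \<sigma>, j + 1)) (\<sigma> (r_max lam j \<sigma> - 1, j)) (\<sigma> (r_max lam j \<sigma> - 1, j + 1)))"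
proof -
  define S where "S = {r. 2 \<le> r \<and> r \<le> col lam j \<and>
                  (quinv (\<sigma> (r, j)) (\<sigma> (r - 1, j)) (\<sigma> (r - 1, j + 1)) \<longleftrightarrow> quinv (\<sigma> (r, j + 1)) (\<sigma> (r - 1, j)) (\<sigma> (r - 1, j + 1)))}"
  have rm: "r_max lam j \<sigma> = (if S = {} then 1 else Max S)"
    unfolding r_max_def S_def Let_def by simp
  with assms have ne: "S \<noteq> {}" and eq: "r_max lam j \<sigma> = Max S" by (auto split: if_splits)
  have fin: "finite S" unfolding S_def by (rule finite_subset[of _ "{..col lam j}"]) auto
  have "Max S \<in> S" using Max_in[OF fin ne] .
  then show ?thesis unfolding eq S_def by simp
qed

lemma rmax_ge1: "1 \<le> r_max lam j \<sigma>"
  using rmax_props[of lam j \<sigma>] by (cases "r_max lam j \<sigma> = 1") auto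

lemma row_eq:
  assumes "2 \<le> r" "r \<le> col lam j"
  shows "of_bool (Ind (tau lam j \<sigma> (r, j)) (tau lam j \<sigma> (r - 1, j))) +
         of_bool (Ind (tau lam j \<sigma> (r, j + 1)) (tau lam j \<sigma> (r - 1, j + 1)))
       = of_bool (Ind (\<sigma> (r, j)) (\<sigma> (r - 1, j))) + (of_bool (Ind (\<sigma> (r, j + 1)) (\<sigma> (r - 1, j + 1))) :: nat)"
proof -
  define m where "m = r_max lam j \<sigma>"
  have m1: "1 \<le> m" unfolding m_def by (rule rmax_ge1)
  have t: "\<And>r' i. tau lam j \<sigma> (r', i) = (if m \<le> r' \<and> r' \<le> col lam j then
       (if i = j then \<sigma> (r', j + 1) else if i = j + 1 then \<sigma> (r', j) else \<sigma> (r', i)) else \<sigma> (r', i))"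
    unfolding tau_def m_def by simp
  consider "m < r" | "r < m" | "r = m" by linarith
  then show ?thesis
  proof cases
    case 1
    then have "m \<le> r - 1" "m \<le> r" by auto
    then have "tau lam j \<sigma> (r, j) = \<sigma> (r, j + 1)" "tau lam j \<sigma> (r - 1, j) = \<sigma> (r - 1, j + 1)"
      "tau lam j \<sigma> (r, j + 1) = \<sigma> (r, j)" "tau lam j \<sigma> (r - 1, j + 1) = \<sigma> (r - 1, j)"
      using assms by (simp_all only: t) auto
    then show ?thesis by (simp add: ac_simps)
  next
    case 2
    then have "\<not> m \<le> r - 1" "\<not> m \<le> r" by auto
    then show ?thesis using assms by (simp add: t)
  next
    case 3
    then have "m \<noteq> 1" using assms by auto
    then have q: "quinv (\<sigma> (r, j)) (\<sigma> (r - 1, j)) (\<sigma> (r - 1, j + 1))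
     \<longleftrightarrow> quinv (\<sigma> (r, j + 1)) (\<sigma> (r - 1, j)) (\<sigma> (r - 1, j + 1))"
      using rmax_props[of lam j \<sigma>] 3 unfolding m_def by auto
    have "\<not> m \<le> r - 1" "m \<le> r" using 3 assms by auto
    then show ?thesis using assms key[OF q] by (simp add: t)
  qed
qed

theorem mainTheorem13:
  fixes lam :: "nat list" and j :: nat and \<sigma> :: "nat \<times> nat \<Rightarrow> letter"
  assumes "is_partition lam"
    and "super_filling lam \<sigma>"
    and "1 \<le> j" and "j + 1 \<le> length lam"
    and "col lam j = col lam (j + 1)"
  shows "maj lam (tau lam j \<sigma>) = maj lam \<sigma>"
proof -
  define k where "k = col lam j"
  define C where "C = {1..k} \<times> {j, j + 1}"
  define F where "F = (\<lambda>\<rho> u. if is_descent lam \<rho> u then leg lam u + 1 else 0)"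
  have Csub: "C \<subseteq> dg lam" unfolding C_def dg_def k_def using assms(3,4,5) by auto
  have fin: "finite (dg lam)" by (rule finite_dg)
  have split: "\<And>\<rho>. maj lam \<rho> = sum (F \<rho>) (dg lam - C) + sum (F \<rho>) C"
    unfolding maj_alt F_def using sum.subset_diff[OF Csub fin] by blast
  have other: "sum (F (tau lam j \<sigma>)) (dg lam - C) = sum (F \<sigma>) (dg lam - C)"
  proof (rule sum.cong[OF refl])
    fix u assume u: "u \<in> dg lam - C"
    obtain r i where ri: "u = (r, i)" by (cases u)
    have "i \<noteq> j \<and> i \<noteq> j + 1" using u assms(5) unfolding ri C_def dg_def k_def by auto
    then have "tau lam j \<sigma> (r, i) = \<sigma> (r, i)" "tau lam j \<sigma> (r - 1, i) = \<sigma> (r - 1, i)"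
      unfolding tau_def by auto
    then show "F (tau lam j \<sigma>) u = F \<sigma> u" unfolding F_def is_descent_def ri by simp
  qed
  have Fcol: "\<And>\<rho> r i. r \<in> {1..k} \<Longrightarrow> i \<in> {j, j + 1} \<Longrightarrow>
      F \<rho> (r, i) = (k - r + 1) * of_bool (2 \<le> r \<and> Ind (\<rho> (r, i)) (\<rho> (r - 1, i)))"
  proof -
    fix \<rho> r i assume r: "r \<in> {1..k}" and i: "i \<in> {j, j + 1}"
    then have "(r, i) \<in> dg lam" using Csub unfolding C_def by auto
    moreover have "leg lam (r, i) = k - r" using i assms(5) unfolding leg_def k_def by auto
    ultimately show "F \<rho> (r, i) = (k - r + 1) * of_bool (2 \<le> r \<and> Ind (\<rho> (r, i)) (\<rho> (r - 1, i)))"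
      unfolding F_def is_descent_def by auto
  qed
  have colsum: "\<And>\<rho>. sum (F \<rho>) C = (\<Sum>r\<in>{1..k}. (k - r + 1) *
       (of_bool (2 \<le> r \<and> Ind (\<rho> (r, j)) (\<rho> (r - 1, j))) + of_bool (2 \<le> r \<and> Ind (\<rho> (r, j + 1)) (\<rho> (r - 1, j + 1)))))"
  proof -
    fix \<rho>
    have "sum (F \<rho>) C = (\<Sum>r\<in>{1..k}. \<Sum>i\<in>{j, j + 1}. F \<rho> (r, i))"
      unfolding C_def by (rule sum.cartesian_product[symmetric, of "\<lambda>r i. F \<rho> (r, i)", simplified])
    also have "\<dots> = (\<Sum>r\<in>{1..k}. F \<rho> (r, j) + F \<rho> (r, j + 1))" by simp
    also have "\<dots> = (\<Sum>r\<in>{1..k}. (k - r + 1) *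
       (of_bool (2 \<le> r \<and> Ind (\<rho> (r, j)) (\<rho> (r - 1, j))) + of_bool (2 \<le> r \<and> Ind (\<rho> (r, j + 1)) (\<rho> (r - 1, j + 1)))))"
      by (rule sum.cong[OF refl]) (simp add: Fcol distrib_left)
    finally show "?thesis \<rho>" .
  qed
  have cols: "sum (F (tau lam j \<sigma>)) C = sum (F \<sigma>) C"
    unfolding colsum
  proof (rule sum.cong[OF refl])
    fix r assume r: "r \<in> {1..k}"
    show "(k - r + 1) * (of_bool (2 \<le> r \<and> Ind (tau lam j \<sigma> (r, j)) (tau lam j \<sigma> (r - 1, j))) +
           of_bool (2 \<le> r \<and> Ind (tau lam j \<sigma> (r, j + 1)) (tau lam j \<sigma> (r - 1, j + 1)))) =
          (k - r + 1) * (of_bool (2 \<le> r \<and> Ind (\<sigma> (r, j)) (\<sigma> (r - 1, j))) +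
           of_bool (2 \<le> r \<and> Ind (\<sigma> (r, j + 1)) (\<sigma> (r - 1, j + 1))))"
    proof (cases "2 \<le> r")
      case True
      then show ?thesis using row_eq[of r lam j \<sigma>] r unfolding k_def by simp
    qed simp
  qed
  show ?thesis using split[of "tau lam j \<sigma>"] split[of \<sigma>] other cols by simp
qed

end
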